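(* Let $d\ge2$ and $\mathbf{x}_i=(x_{1,i},\ldots,x_{n_i,i})^\top\in\mathbb{R}^{n_i}$, $i\in[d]$, with $\mathbf{1}_{n_i}^\top\mathbf{x}_i=\mathbf{1}_{n_{i+1}}^\top\mathbf{x}_{i+1}$ for $i\in[d-1]$. Then $$\frac{n_1\cdots n_d}{\max_in_i}\sum_{i=1}^d\|\mathbf{x}_i\|^2\le\sum_{j_1=1}^{n_1}\cdots\sum_{j_d=1}^{n_d}(x_{j_1,1}+\cdots+x_{j_d,d})^2\le\sum_{i=1}^d\frac{dn_1\cdots n_d}{n_i}\|\mathbf{x}_i\|^2\le\frac{dn_1\cdots n_d}{\min_in_i}\sum_{i=1}^d\|\mathbf{x}_i\|^2.$$
   Context: $\|\cdot\|$ is the Euclidean norm and $\mathbf{1}_n$ the all-ones vector. *)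

theory Defs
  imports Complex_Main "HOL-Library.FuncSet"
begin

end

theory Submission imports Defs begin

lemma PiE_single:
  fixes n :: "nat \<Rightarrow> nat" and h :: "nat \<Rightarrow> real"
  assumes "i < d"
  shows "(\<Sum>J\<in>(\<Pi>\<^sub>E m\<in>{..<d}. {..<n m}). h (J i))
       = (\<Sum>j<n i. h j) * real (\<Prod>m\<in>{..<d}-{i}. n m)"
proof -
  define F where "F = (\<lambda>m y. if m = i then h y else (1::real))"
  have "(\<Prod>m\<in>{..<d}. \<Sum>y\<in>{..<n m}. F m y) = (\<Sum>J\<in>(\<Pi>\<^sub>E m\<in>{..<d}. {..<n m}). \<Prod>m\<in>{..<d}. F m (J m))"
    by (rule prod_sum_PiE) auto
  moreover have "(\<Prod>m\<in>{..<d}. \<Sum>y\<in>{..<n m}. F m y) = (\<Sum>j<n i. h j) * real (\<Prod>m\<in>{..<d}-{i}. n m)"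
  proof -
    have "(\<Prod>m\<in>{..<d}-{i}. \<Sum>y\<in>{..<n m}. F m y) = (\<Prod>m\<in>{..<d}-{i}. real (n m))"
      by (rule prod.cong) (auto simp: F_def)
    then show ?thesis using assms by (simp add: prod.remove[of "{..<d}" i] F_def of_nat_prod)
  qed
  moreover have "\<And>J. (\<Prod>m\<in>{..<d}. F m (J m)) = h (J i)"
    using assms by (simp add: prod.remove[of "{..<d}" i] F_def cong: prod.cong)
  ultimately show ?thesis by simp
qed

lemma PiE_pair:
  fixes n :: "nat \<Rightarrow> nat" and f g :: "nat \<Rightarrow> real"
  assumes "i < d" "k < d" "i \<noteq> k"
  shows "(\<Sum>J\<in>(\<Pi>\<^sub>E m\<in>{..<d}. {..<n m}). f (J i) * g (J k))
       = (\<Sum>j<n i. f j) * (\<Sum>j<n k. g j) * real (\<Prod>m\<in>{..<d}-{i}-{k}. n m)"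
proof -
  define F where "F = (\<lambda>m y. if m = i then f y else if m = k then g y else (1::real))"
  have "(\<Prod>m\<in>{..<d}. \<Sum>y\<in>{..<n m}. F m y) = (\<Sum>J\<in>(\<Pi>\<^sub>E m\<in>{..<d}. {..<n m}). \<Prod>m\<in>{..<d}. F m (J m))"
    by (rule prod_sum_PiE) auto
  moreover have "(\<Prod>m\<in>{..<d}. \<Sum>y\<in>{..<n m}. F m y) = (\<Sum>j<n i. f j) * (\<Sum>j<n k. g j) * real (\<Prod>m\<in>{..<d}-{i}-{k}. n m)"
  proof -
    have "(\<Prod>m\<in>{..<d}-{i}-{k}. \<Sum>y\<in>{..<n m}. F m y) = (\<Prod>m\<in>{..<d}-{i}-{k}. real (n m))"
      by (rule prod.cong) (auto simp: F_def)
    then show ?thesis using assms by (simp add: prod.remove[of "{..<d}" i] prod.remove[of "{..<d}-{i}" k] F_def of_nat_prod)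
  qed
  moreover have "\<And>J. (\<Prod>m\<in>{..<d}. F m (J m)) = f (J i) * g (J k)"
  proof -
    fix J :: "nat \<Rightarrow> nat"
    have "(\<Prod>m\<in>{..<d}-{i}-{k}. F m (J m)) = 1" by (rule prod.neutral) (auto simp: F_def)
    then show "(\<Prod>m\<in>{..<d}. F m (J m)) = f (J i) * g (J k)" using assms by (simp add: prod.remove[of "{..<d}" i] prod.remove[of "{..<d}-{i}" k] F_def)
  qed
  ultimately show ?thesis by simp
qed

lemma sq_sum_le:
  fixes a :: "nat \<Rightarrow> real"
  assumes "finite A"
  shows "(\<Sum>i\<in>A. a i)\<^sup>2 \<le> real (card A) * (\<Sum>i\<in>A. (a i)\<^sup>2)"
proof -
  have "(\<Sum>i\<in>A. a i)\<^sup>2 = (\<Sum>i\<in>A. \<Sum>k\<in>A. a i * a k)"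
    by (simp add: power2_eq_square sum_product)
  also have "\<dots> \<le> (\<Sum>i\<in>A. \<Sum>k\<in>A. ((a i)\<^sup>2 + (a k)\<^sup>2) / 2)"
  proof (intro sum_mono)
    fix i k
    show "a i * a k \<le> ((a i)\<^sup>2 + (a k)\<^sup>2) / 2"
      using sum_squares_bound[of "a i" "a k"] by simp
  qed
  also have "\<dots> = real (card A) * (\<Sum>i\<in>A. (a i)\<^sup>2)"
  proof -
    have "(\<Sum>i\<in>A. \<Sum>k\<in>A. ((a i)\<^sup>2 + (a k)\<^sup>2) / 2)
        = (\<Sum>i\<in>A. \<Sum>k\<in>A. (a i)\<^sup>2 / 2) + (\<Sum>i\<in>A. \<Sum>k\<in>A. (a k)\<^sup>2 / 2)"
      by (simp add: add_divide_distrib sum.distrib)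
    also have "(\<Sum>i\<in>A. \<Sum>k\<in>A. (a k)\<^sup>2 / 2) = (\<Sum>i\<in>A. \<Sum>k\<in>A. (a i)\<^sup>2 / 2)"
      by (rule sum.swap)
    also have "(\<Sum>i\<in>A. \<Sum>k\<in>A. (a i)\<^sup>2 / 2) = real (card A) * (\<Sum>i\<in>A. (a i)\<^sup>2) / 2"
      by (simp add: sum_distrib_left sum_divide_distrib)
    finally show ?thesis by simp
  qed
  finally show ?thesis .
qed

theorem lemma2p3:
  fixes d :: nat and n :: "nat \<Rightarrow> nat" and x :: "nat \<Rightarrow> nat \<Rightarrow> real"
  assumes "d \<ge> 2"
    and "\<forall>i<d. n i \<ge> 1"
    and "\<forall>i. i + 1 < d \<longrightarrow> (\<Sum>j<n i. x i j) = (\<Sum>j<n (i + 1). x (i + 1) j)"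
  shows "real (\<Prod>i<d. n i) / real (Max (n ` {..<d})) * (\<Sum>i<d. \<Sum>j<n i. (x i j)\<^sup>2)
           \<le> (\<Sum>J\<in>(\<Pi>\<^sub>E i\<in>{..<d}. {..<n i}). (\<Sum>i<d. x i (J i))\<^sup>2)
       \<and> (\<Sum>J\<in>(\<Pi>\<^sub>E i\<in>{..<d}. {..<n i}). (\<Sum>i<d. x i (J i))\<^sup>2)
           \<le> (\<Sum>i<d. real d * real (\<Prod>k<d. n k) / real (n i) * (\<Sum>j<n i. (x i j)\<^sup>2))
       \<and> (\<Sum>i<d. real d * real (\<Prod>k<d. n k) / real (n i) * (\<Sum>j<n i. (x i j)\<^sup>2))
           \<le> real d * real (\<Prod>i<d. n i) / real (Min (n ` {..<d})) * (\<Sum>i<d. \<Sum>j<n i. (x i j)\<^sup>2)"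
proof -
  define P where "P = (\<Pi>\<^sub>E i\<in>{..<d}. {..<n i})"
  define N where "N = real (\<Prod>i<d. n i)"
  define q where "q = (\<lambda>i. \<Sum>j<n i. (x i j)\<^sup>2)"
  define T where "T = (\<lambda>i k. \<Sum>J\<in>P. x i (J i) * x k (J k))"
  have Nnn: "N \<ge> 0" unfolding N_def by (rule of_nat_0_le_iff)
  have npos: "i < d \<Longrightarrow> real (n i) > 0" for i using assms(2) by auto
  have qnn: "q i \<ge> 0" for i unfolding q_def by (intro sum_nonneg) auto
  have c_eq: "real (\<Prod>m\<in>{..<d}-{i}. n m) = N / real (n i)" if "i < d" for i
  proof -
    have "N = real (n i) * real (\<Prod>m\<in>{..<d}-{i}. n m)"
      unfolding N_def using that by (simp add: prod.remove[of "{..<d}" i])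
    then show ?thesis using npos[OF that] by (simp add: field_simps)
  qed
  have S: "(\<Sum>j<n i. x i j) = (\<Sum>j<n 0. x 0 j)" if "i < d" for i
    using that
  proof (induction i)
    case 0 then show ?case by simp
  next
    case (Suc i)
    then show ?case using assms(3)[rule_format, of i] by simp
  qed
  have diag: "T i i = q i * (N / real (n i))" if "i < d" for i
  proof -
    have "T i i = (\<Sum>J\<in>P. (\<lambda>j. (x i j)\<^sup>2) (J i))"
      unfolding T_def by (simp add: power2_eq_square)
    also have "\<dots> = q i * real (\<Prod>m\<in>{..<d}-{i}. n m)"
      unfolding P_def q_def by (rule PiE_single[OF that])
    finally show ?thesis using c_eq[OF that] by simp
  qed
  have off: "T i k \<ge> 0" if "i < d" "k < d" "i \<noteq> k" for i k
  proof -
    have "T i k = (\<Sum>j<n i. x i j) * (\<Sum>j<n k. x k j) * real (\<Prod>m\<in>{..<d}-{i}-{k}. n m)"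
      unfolding T_def P_def by (rule PiE_pair[OF that])
    also have "\<dots> = (\<Sum>j<n 0. x 0 j)\<^sup>2 * real (\<Prod>m\<in>{..<d}-{i}-{k}. n m)"
      using S[OF that(1)] S[OF that(2)] by (simp add: power2_eq_square)
    moreover have "0 \<le> (\<Sum>j<n 0. x 0 j)\<^sup>2 * real (\<Prod>m\<in>{..<d}-{i}-{k}. n m)" by (intro mult_nonneg_nonneg zero_le_power2 of_nat_0_le_iff)
    ultimately show ?thesis by linarith
  qed
  have expand: "(\<Sum>J\<in>P. (\<Sum>i<d. x i (J i))\<^sup>2) = (\<Sum>i<d. \<Sum>k<d. T i k)"
  proof -
    have "(\<Sum>J\<in>P. (\<Sum>i<d. x i (J i))\<^sup>2) = (\<Sum>J\<in>P. \<Sum>i<d. \<Sum>k<d. x i (J i) * x k (J k))"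
      by (simp add: power2_eq_square sum_product)
    also have "\<dots> = (\<Sum>i<d. \<Sum>J\<in>P. \<Sum>k<d. x i (J i) * x k (J k))"
      by (rule sum.swap)
    also have "\<dots> = (\<Sum>i<d. \<Sum>k<d. T i k)"
      unfolding T_def by (intro sum.cong refl sum.swap)
    finally show ?thesis .
  qed
  have "0 \<in> {..<d}" using assms(1) by simp
  then have "finite (n ` {..<d})" "n ` {..<d} \<noteq> {}" by auto
  have L: "N / real (Max (n ` {..<d})) * (\<Sum>i<d. q i) \<le> (\<Sum>i<d. \<Sum>k<d. T i k)"
  proof -
    have "N / real (Max (n ` {..<d})) * (\<Sum>i<d. q i) = (\<Sum>i<d. N / real (Max (n ` {..<d})) * q i)"
      by (simp add: sum_distrib_left)
    also have "\<dots> \<le> (\<Sum>i<d. T i i)"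
    proof (intro sum_mono)
      fix i assume i: "i \<in> {..<d}"
      have "n i \<le> Max (n ` {..<d})" using i \<open>finite (n ` {..<d})\<close> by auto
      then have "N / real (Max (n ` {..<d})) \<le> N / real (n i)"
      proof -
        have m: "0 < real (n i)" "real (n i) \<le> real (Max (n ` {..<d}))"
          using npos[of i] i \<open>n i \<le> Max (n ` {..<d})\<close> by auto
        have "0 < real (Max (n ` {..<d})) * real (n i)" using m by simp
        then show ?thesis using divide_left_mono[OF m(2) Nnn] by simp
      qed
      then show "N / real (Max (n ` {..<d})) * q i \<le> T i i"
      proof -
        have "N / real (Max (n ` {..<d})) * q i \<le> N / real (n i) * q i"
          by (rule mult_right_mono[OF \<open>N / real (Max (n ` {..<d})) \<le> N / real (n i)\<close> qnn])
        moreover have "T i i = N / real (n i) * q i" using diag[of i] i by (metis mult.commute lessThan_iff)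
        ultimately show ?thesis by linarith
      qed
    qed
    also have "\<dots> \<le> (\<Sum>i<d. \<Sum>k<d. T i k)"
    proof (intro sum_mono)
      fix i assume i: "i \<in> {..<d}"
      have "(\<Sum>k<d. T i k) = T i i + (\<Sum>k\<in>{..<d}-{i}. T i k)"
        using i by (simp add: sum.remove[of "{..<d}" i])
      moreover have "(\<Sum>k\<in>{..<d}-{i}. T i k) \<ge> 0"
        using i by (intro sum_nonneg off) auto
      ultimately show "T i i \<le> (\<Sum>k<d. T i k)" by simp
    qed
    finally show ?thesis .
  qed
  have U: "(\<Sum>J\<in>P. (\<Sum>i<d. x i (J i))\<^sup>2) \<le> (\<Sum>i<d. real d * N / real (n i) * q i)"
  proof -
    have "(\<Sum>J\<in>P. (\<Sum>i<d. x i (J i))\<^sup>2) \<le> (\<Sum>J\<in>P. real d * (\<Sum>i<d. (x i (J i))\<^sup>2))"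
      using sq_sum_le[of "{..<d}"] by (intro sum_mono) auto
    also have "\<dots> = real d * (\<Sum>J\<in>P. \<Sum>i<d. (x i (J i))\<^sup>2)"
      by (rule sum_distrib_left[symmetric])
    also have "\<dots> = real d * (\<Sum>i<d. \<Sum>J\<in>P. (x i (J i))\<^sup>2)"
      by (subst sum.swap) (rule refl)
    also have "\<dots> = real d * (\<Sum>i<d. T i i)"
      unfolding T_def by (simp add: power2_eq_square)
    also have "\<dots> = (\<Sum>i<d. real d * N / real (n i) * q i)"
      unfolding sum_distrib_left by (intro sum.cong refl) (simp add: diag)
    finally show ?thesis .
  qed
  have U2: "(\<Sum>i<d. real d * N / real (n i) * q i) \<le> real d * N / real (Min (n ` {..<d})) * (\<Sum>i<d. q i)"
  proof -
    have "(\<Sum>i<d. real d * N / real (n i) * q i) \<le> (\<Sum>i<d. real d * N / real (Min (n ` {..<d})) * q i)"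
    proof (intro sum_mono)
      fix i assume i: "i \<in> {..<d}"
      have "Min (n ` {..<d}) \<le> n i" using i \<open>finite (n ` {..<d})\<close> by auto
      moreover have "Min (n ` {..<d}) \<ge> 1"
        using assms(2) \<open>finite (n ` {..<d})\<close> \<open>n ` {..<d} \<noteq> {}\<close> by auto
      ultimately have "real d * N / real (n i) \<le> real d * N / real (Min (n ` {..<d}))"
      proof -
        have m: "0 < real (Min (n ` {..<d}))" "real (Min (n ` {..<d})) \<le> real (n i)"
          using \<open>Min (n ` {..<d}) \<ge> 1\<close> \<open>Min (n ` {..<d}) \<le> n i\<close> by auto
        have dN: "0 \<le> real d * N" using Nnn by simp
        have "0 < real (n i) * real (Min (n ` {..<d}))" using m by simp
        then show ?thesis using divide_left_mono[OF m(2) dN] by simp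
      qed
      then show "real d * N / real (n i) * q i \<le> real d * N / real (Min (n ` {..<d})) * q i"
        by (rule mult_right_mono[OF _ qnn])
    qed
    also have "\<dots> = real d * N / real (Min (n ` {..<d})) * (\<Sum>i<d. q i)"
      by (simp add: sum_distrib_left)
    finally show ?thesis .
  qed
  have fin: "N / real (Max (n ` {..<d})) * (\<Sum>i<d. q i) \<le> (\<Sum>J\<in>P. (\<Sum>i<d. x i (J i))\<^sup>2)
     \<and> (\<Sum>J\<in>P. (\<Sum>i<d. x i (J i))\<^sup>2) \<le> (\<Sum>i<d. real d * N / real (n i) * q i)
     \<and> (\<Sum>i<d. real d * N / real (n i) * q i) \<le> real d * N / real (Min (n ` {..<d})) * (\<Sum>i<d. q i)"
    using L U U2 expand by linarith
  then show ?thesis unfolding P_def N_def q_def .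
qed

end
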